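(* Let $(X,d)$ be a separable metric space, let $T\colon X\to X$ be a Borel measurable map, and let $\mu,\nu$ be $T$-invariant Borel probability measures on $X$. Let $(s_n)_{n\ge1}$ be a two-jumpy scale sequence. Define \[\phi(x,y)=\liminf_{n\to\infty} s_n\, d(T^n x,y),\qquad \psi(x,y)=\liminf_{n\to\infty} s_n\, d(T^n x,T^n y),\qquad x,y\in X.\] Then both $\phi$ and $\psi$ take values in $\{0,\infty\}$ for $\mu\times\nu$-almost every $(x,y)\in X\times X$. In particular, for every $\alpha>0$ this holds for the gauges $\phi_\alpha(x,y)=\liminf_{n} n^\alpha d(T^nx,y)$ and $\psi_\alpha(x,y)=\liminf_n n^\alpha d(T^nx,T^ny)$.
   Context: A scale sequence is a sequence $(s_n)_{n\ge1}$ of positive reals with $s_n\to\infty$. It is two-jumpy if $s_{n+1}\ge s_n$ for all sufficiently large $n$ and $\liminf_{n\to\infty} s_{2n}/s_n>1$. A measure $\mu$ is $T$-invariant if $\mu(T^{-1}B)=\mu(B)$ for all Borel sets $B$. *)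

theory Defs
  imports "HOL-Probability.Probability"
begin

definition scale_seq :: "(nat \<Rightarrow> real) \<Rightarrow> bool" where
  "scale_seq s \<longleftrightarrow> (\<forall>n\<ge>1. s n > 0) \<and> filterlim s at_top sequentially"

definition two_jumpy :: "(nat \<Rightarrow> real) \<Rightarrow> bool" where
  "two_jumpy s \<longleftrightarrow> (\<forall>\<^sub>F n in sequentially. s (Suc n) \<ge> s n)
      \<and> liminf (\<lambda>n. ereal (s (2 * n) / s n)) > 1"

definition T_invariant :: "('a \<Rightarrow> 'a) \<Rightarrow> 'a measure \<Rightarrow> bool" where
  "T_invariant T M \<longleftrightarrow> (\<forall>B \<in> sets M. emeasure M (T -` B \<inter> space M) = emeasure M B)"

definition gauge_phi :: "(nat \<Rightarrow> real) \<Rightarrow> ('a::metric_space \<Rightarrow> 'a) \<Rightarrow> 'a \<Rightarrow> 'a \<Rightarrow> ereal" where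
  "gauge_phi s T x y = liminf (\<lambda>n. ereal (s n * dist ((T ^^ n) x) y))"

definition gauge_psi :: "(nat \<Rightarrow> real) \<Rightarrow> ('a::metric_space \<Rightarrow> 'a) \<Rightarrow> 'a \<Rightarrow> 'a \<Rightarrow> ereal" where
  "gauge_psi s T x y = liminf (\<lambda>n. ereal (s n * dist ((T ^^ n) x) ((T ^^ n) y)))"

end

theory Submission imports Defs begin
lemma comb_max:
  fixes a :: "nat \<Rightarrow> real" and lam :: real
  assumes a0: "\<And>i. a i \<ge> 0" and lam: "lam > 0"
  shows "lam * real (card {i\<in>{j..<H}. \<exists>n\<in>{1..N}. lam * real n \<le> (\<Sum>k\<in>{i..<i+n}. a k)})
          \<le> (\<Sum>k\<in>{j..<H+N}. a k)"
proof (induction "H - j" arbitrary: j rule: less_induct)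
  case less
  define G where "G = {i. \<exists>n\<in>{1..N}. lam * real n \<le> (\<Sum>k\<in>{i..<i+n}. a k)}"
  have eq: "{i\<in>{j'..<H}. \<exists>n\<in>{1..N}. lam * real n \<le> (\<Sum>k\<in>{i..<i+n}. a k)} = {j'..<H} \<inter> G" for j'
    by (auto simp: G_def)
  show ?case
  proof (cases "j < H")
    case False
    then show ?thesis using a0 by (simp add: sum_nonneg)
  next
    case True
    show ?thesis
    proof (cases "j \<in> G")
      case False
      have "{j..<H} \<inter> G = {Suc j..<H} \<inter> G" using False True by (auto simp: Suc_le_eq le_less)
      moreover have "(\<Sum>k\<in>{Suc j..<H+N}. a k) \<le> (\<Sum>k\<in>{j..<H+N}. a k)"
        by (rule sum_mono2) (use a0 in auto)
      moreover have "lam * real (card ({Suc j..<H} \<inter> G)) \<le> (\<Sum>k\<in>{Suc j..<H+N}. a k)"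
        using less[of "Suc j"] True eq by auto
      ultimately show ?thesis using eq by simp
    next
      case True2: True
      then obtain n where n: "n \<in> {1..N}" "lam * real n \<le> (\<Sum>k\<in>{j..<j+n}. a k)"
        by (auto simp: G_def)
      have sub: "{j..<H} \<inter> G \<subseteq> {j..<j+n} \<union> ({j+n..<H} \<inter> G)" by auto
      have "card ({j..<H} \<inter> G) \<le> card ({j..<j+n} \<union> ({j+n..<H} \<inter> G))"
        by (rule card_mono[OF _ sub]) auto
      also have "\<dots> \<le> n + card ({j+n..<H} \<inter> G)"
        using card_Un_le[of "{j..<j+n}" "{j+n..<H} \<inter> G"] by simp
      finally have c: "real (card ({j..<H} \<inter> G)) \<le> real n + real (card ({j+n..<H} \<inter> G))"
        by linarith
      have ih: "lam * real (card ({j+n..<H} \<inter> G)) \<le> (\<Sum>k\<in>{j+n..<H+N}. a k)"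
        using less[of "j+n"] True n eq by auto
      have split: "(\<Sum>k\<in>{j..<H+N}. a k) = (\<Sum>k\<in>{j..<j+n}. a k) + (\<Sum>k\<in>{j+n..<H+N}. a k)"
        using True n by (intro sum.atLeastLessThan_concat[symmetric]) auto
      have "lam * real (card ({j..<H} \<inter> G)) \<le> lam * real n + lam * real (card ({j+n..<H} \<inter> G))"
        using c lam by (simp add: distrib_left[symmetric])
      also have "\<dots> \<le> (\<Sum>k\<in>{j..<H+N}. a k)" using n ih split by linarith
      finally show ?thesis using eq by simp
    qed
  qed
qed

locale mpres = prob_space P for P :: "'b measure" +
  fixes S :: "'b \<Rightarrow> 'b"
  assumes S_meas: "S \<in> measurable P P" and S_pres: "distr P P S = P"
begin

lemma Sn_meas: "(S ^^ n) \<in> measurable P P"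
  by (rule measurable_compose_n[OF S_meas])

lemma Sn_pres: "distr P P (S ^^ n) = P"
proof (induction n)
  case 0
  then show ?case by (simp add: distr_id[unfolded id_def])
next
  case (Suc n)
  have "distr P P (S ^^ Suc n) = distr P P ((S ^^ n) \<circ> S)"
    by (simp only: funpow_Suc_right)
  also have "\<dots> = distr (distr P P S) P (S ^^ n)"
    by (rule distr_distr[symmetric, OF Sn_meas S_meas])
  also have "\<dots> = P" using Suc S_pres by simp
  finally show ?case .
qed

lemma Sn_measure: "B \<in> sets P \<Longrightarrow> measure P ((S ^^ n) -` B \<inter> space P) = measure P B"
  using measure_distr[OF Sn_meas, of B n] Sn_pres[of n] by simp

lemma Sn_space: "z \<in> space P \<Longrightarrow> (S ^^ n) z \<in> space P"
  using Sn_meas[of n] by (auto simp: measurable_def)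

lemma maximal:
  assumes A: "A \<in> sets P" and lam: "lam > 0"
  shows "measure P {z\<in>space P. \<exists>n\<in>{1..N}. lam * real n \<le> (\<Sum>i<n. indicator A ((S ^^ i) z))}
           \<le> measure P A / lam"
proof -
  define F where "F = {z\<in>space P. \<exists>n\<in>{1..N}. lam * real n \<le> (\<Sum>i<n. indicator A ((S ^^ i) z))}"
  have Fm: "F \<in> sets P"
    unfolding F_def using A Sn_meas by measurable
  have pt: "lam * (\<Sum>j<H. indicator ((S ^^ j) -` F \<inter> space P) z)
      \<le> (\<Sum>j<H+N. indicator ((S ^^ j) -` A \<inter> space P) z)" if z: "z \<in> space P" for z H
  proof -
    define a where "a k = (indicator A ((S ^^ k) z) :: real)" for k
    have a0: "\<And>i. a i \<ge> 0" by (simp add: a_def)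
    have inF: "(S ^^ j) z \<in> F \<longleftrightarrow> (\<exists>n\<in>{1..N}. lam * real n \<le> (\<Sum>k\<in>{j..<j+n}. a k))" for j
    proof -
      have "(\<Sum>i<n. indicator A ((S ^^ i) ((S ^^ j) z))) = (\<Sum>k\<in>{j..<j+n}. a k)" for n
      proof -
        have "(\<Sum>k\<in>{j..<j+n}. a k) = (\<Sum>k\<in>{0+j..<n+j}. a k)" by (simp add: add.commute)
        also have "\<dots> = (\<Sum>i=0..<n. a (i+j))" by (rule sum.shift_bounds_nat_ivl)
        finally show ?thesis by (simp add: a_def funpow_add lessThan_atLeast0)
      qed
      then show ?thesis using Sn_space[OF z] by (simp add: F_def)
    qed
    have "(\<Sum>j<H. indicator ((S ^^ j) -` F \<inter> space P) z) = (\<Sum>j<H. indicator F ((S ^^ j) z) :: real)"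
      using z by (simp add: indicator_def)
    also have "\<dots> = real (card {j\<in>{0..<H}. (S ^^ j) z \<in> F})"
      by (simp add: indicator_def sum.If_cases lessThan_atLeast0 Int_def)
    also have "\<dots> = real (card {i\<in>{0..<H}. \<exists>n\<in>{1..N}. lam * real n \<le> (\<Sum>k\<in>{i..<i+n}. a k)})"
      using inF by simp
    finally have e1: "(\<Sum>j<H. indicator ((S ^^ j) -` F \<inter> space P) z) = \<dots>" .
    have e2: "(\<Sum>j<H+N. indicator ((S ^^ j) -` A \<inter> space P) z) = (\<Sum>k\<in>{0..<H+N}. a k)"
      using z by (simp add: a_def indicator_def lessThan_atLeast0)
    show ?thesis unfolding e1 e2 by (rule comb_max[OF a0 lam])
  qed
  have pre: "(S ^^ j) -` B \<inter> space P \<in> sets P" if "B \<in> sets P" for B j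
    using Sn_meas[of j] that by (auto simp: measurable_def)
  have int: "lam * (real H * measure P F) \<le> real (H+N) * measure P A" for H
  proof -
    have "integral\<^sup>L P (\<lambda>z. lam * (\<Sum>j<H. indicator ((S ^^ j) -` F \<inter> space P) z))
        \<le> integral\<^sup>L P (\<lambda>z. (\<Sum>j<H+N. indicator ((S ^^ j) -` A \<inter> space P) z))"
      by (rule integral_mono) (auto intro!: integrable_sum integrable_mult_right integrable_real_indicator pre Fm A pt simp: less_top[symmetric])
    moreover have "integral\<^sup>L P (\<lambda>z. lam * (\<Sum>j<H. indicator ((S ^^ j) -` F \<inter> space P) z))
        = lam * (real H * measure P F)"
      using pre[OF Fm] by (subst integral_mult_right_zero, subst Bochner_Integration.integral_sum)
        (auto intro!: integrable_real_indicator simp: less_top[symmetric] Sn_measure[OF Fm] Int_absorb2 sets.sets_into_space)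
    moreover have "integral\<^sup>L P (\<lambda>z. (\<Sum>j<H+N. indicator ((S ^^ j) -` A \<inter> space P) z :: real))
        = real (H+N) * measure P A"
      using pre[OF A] by (subst Bochner_Integration.integral_sum)
        (auto intro!: integrable_real_indicator simp: less_top[symmetric] Sn_measure[OF A] Int_absorb2 sets.sets_into_space)
    ultimately show ?thesis using lam by auto
  qed
  have "lam * measure P F \<le> measure P A"
  proof (rule ccontr)
    assume "\<not> ?thesis"
    then have d: "lam * measure P F - measure P A > 0" by simp
    obtain H :: nat where H: "real N * measure P A / (lam * measure P F - measure P A) < real H"
      using reals_Archimedean2 by blast
    have "real N * measure P A < real H * (lam * measure P F - measure P A)"
      using H d by (simp add: divide_less_eq mult.commute)
    moreover have "lam * (real H * measure P F) \<le> real (H+N) * measure P A" by (rule int)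
    ultimately show False by (simp add: algebra_simps)
  qed
  then show ?thesis using lam unfolding F_def by (simp add: le_divide_eq mult.commute)
qed


lemma subinv_AE:
  fixes f :: "'b \<Rightarrow> ereal"
  assumes fm: "f \<in> borel_measurable P" and le: "\<And>z. z \<in> space P \<Longrightarrow> f (S z) \<le> f z"
  shows "AE z in P. f (S z) = f z"
proof -
  have q: "AE z in P. f (S z) < ereal (of_rat q) \<longrightarrow> f z < ereal (of_rat q)" for q
  proof -
    define B where "B = {z\<in>space P. f z < ereal (of_rat q)}"
    define C where "C = S -` B \<inter> space P"
    have Bm: "B \<in> sets P" unfolding B_def using fm by measurable
    have Cm: "C \<in> sets P" unfolding C_def using Bm S_meas by (auto simp: measurable_def)
    have BC: "B \<subseteq> C" unfolding B_def C_def using le S_meas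
      by (auto simp: measurable_def intro: le_less_trans)
    have "measure P C = measure P B" unfolding C_def using Sn_measure[OF Bm, of 1] by simp
    then have "measure P (C - B) = 0" using finite_measure_Diff[OF Cm Bm BC] by simp
    then have "C - B \<in> null_sets P" using Cm Bm by (auto simp: emeasure_eq_measure null_sets_def)
    moreover have "{z\<in>space P. \<not> (f (S z) < ereal (of_rat q) \<longrightarrow> f z < ereal (of_rat q))} \<subseteq> C - B"
      unfolding B_def C_def using S_meas by (auto simp: measurable_def)
    ultimately show ?thesis by (rule AE_I')
  qed
  have "AE z in P. \<forall>q. f (S z) < ereal (of_rat q) \<longrightarrow> f z < ereal (of_rat q)"
    using q by (simp add: AE_all_countable)
  then show ?thesis
  proof (rule AE_mp, intro AE_I2 impI)
    fix z assume z: "z \<in> space P" and H: "\<forall>q. f (S z) < ereal (of_rat q) \<longrightarrow> f z < ereal (of_rat q)"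
    show "f (S z) = f z"
    proof (rule ccontr)
      assume "f (S z) \<noteq> f z"
      then have lt: "f (S z) < f z" using le[OF z] by simp
      obtain x where x: "f (S z) < ereal x" "ereal x < f z" using ereal_dense2[OF lt] by blast
      obtain y where y: "f (S z) < ereal y" "ereal y < ereal x" using ereal_dense2[OF x(1)] by blast
      obtain r where r: "r \<in> \<rat>" "y < r" "r < x" using Rats_dense_in_real y(2) by auto
      obtain q where rq: "r = of_rat q" using r(1) Rats_cases by blast
      have yq: "ereal y < ereal (of_rat q)" using r(2) rq by simp
      have "f (S z) < ereal (of_rat q)" using y(1) yq by (rule less_trans)
      have qx: "ereal (of_rat q) < ereal x" using r(3) rq by simp
      have "ereal (of_rat q) < f z" using qx x(2) by (rule less_trans)
      moreover from H \<open>f (S z) < ereal (of_rat q)\<close> have "f z < ereal (of_rat q)" by blast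
      ultimately show False by simp
    qed
  qed
qed

lemma subinv_AE_all:
  fixes f :: "'b \<Rightarrow> ereal"
  assumes fm: "f \<in> borel_measurable P" and le: "\<And>z. z \<in> space P \<Longrightarrow> f (S z) \<le> f z"
  shows "AE z in P. \<forall>j. f ((S ^^ j) z) = f z"
proof -
  have "AE z in P. f (S ((S ^^ j) z)) = f ((S ^^ j) z)" for j
  proof (rule AE_distrD[OF Sn_meas])
    show "AE z in distr P P (S ^^ j). f (S z) = f z" unfolding Sn_pres by (rule subinv_AE[OF fm le])
  qed
  then have "AE z in P. \<forall>j. f (S ((S ^^ j) z)) = f ((S ^^ j) z)" by (simp add: AE_all_countable)
  then show ?thesis
  proof (rule AE_mp, intro AE_I2 impI allI)
    fix z j assume "\<forall>j. f (S ((S ^^ j) z)) = f ((S ^^ j) z)"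
    then show "f ((S ^^ j) z) = f z" by (induction j) auto
  qed
qed


lemma F_meas: assumes A: "A \<in> sets P" shows "{z\<in>space P. \<exists>n\<in>{1..N}. lam * real n \<le> (\<Sum>i<n. indicator A ((S ^^ i) z))} \<in> sets P"
  using A Sn_meas by measurable

lemma zero_inf:
  fixes \<rho> :: "'b \<Rightarrow> real" and s :: "nat \<Rightarrow> real"
  assumes rho_meas: "\<rho> \<in> borel_measurable P" and rho0: "\<And>z. \<rho> z \<ge> 0"
    and spos: "\<forall>n\<ge>1. s n > 0" and tj: "two_jumpy s"
  shows "AE z in P. liminf (\<lambda>n. ereal (s n * \<rho> ((S ^^ n) z))) \<in> {0, \<infinity>}"
proof -
  define \<Phi> where "\<Phi> z = liminf (\<lambda>n. ereal (s n * \<rho> ((S ^^ n) z)))" for z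
  have fm: "(\<lambda>z. ereal (s n * \<rho> ((S ^^ n) z))) \<in> borel_measurable P" for n
    using measurable_compose[OF Sn_meas[of n] rho_meas] by measurable
  have \<Phi>_meas: "\<Phi> \<in> borel_measurable P"
    unfolding \<Phi>_def by (rule borel_measurable_liminf[OF fm])
  from tj have ev_mono: "\<forall>\<^sub>F n in sequentially. s n \<le> s (Suc n)"
    and lim1: "1 < liminf (\<lambda>n. ereal (s (2 * n) / s n))" by (auto simp: two_jumpy_def)
  obtain c where c1: "1 < c" and cl: "ereal c < liminf (\<lambda>n. ereal (s (2 * n) / s n))"
    using ereal_dense2[OF lim1] by auto
  have "\<forall>\<^sub>F n in sequentially. ereal c < ereal (s (2 * n) / s n)"
    by (rule less_LiminfD[OF cl])
  then have "\<forall>\<^sub>F n in sequentially. s n \<le> s (Suc n) \<and> c < s (2 * n) / s n \<and> 1 \<le> n"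
    using ev_mono by (auto elim: eventually_elim2 simp: eventually_conj_iff eventually_ge_at_top)
  then obtain N0 where N0: "\<And>n. n \<ge> N0 \<Longrightarrow> s n \<le> s (Suc n) \<and> c < s (2 * n) / s n \<and> 1 \<le> n"
    by (auto simp: eventually_sequentially)
  have N01: "N0 \<ge> 1" using N0[of N0] by simp
  have smono: "s m \<le> s n" if "N0 \<le> m" "m \<le> n" for m n
    using that(2)
  proof (induction n rule: dec_induct)
    case base then show ?case by simp
  next
    case (step k) then show ?case using N0[of k] that(1) by auto
  qed
  have sc: "c * s m < s (2 * m)" if "m \<ge> N0" for m
    using N0[OF that] spos by (auto simp: less_divide_eq)
  have sub: "\<Phi> (S z) \<le> \<Phi> z" for z
  proof -
    have "\<Phi> (S z) = liminf (\<lambda>n. ereal (s n * \<rho> ((S ^^ (n+1)) z)))"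
      unfolding \<Phi>_def by (simp only: Suc_eq_plus1[symmetric] funpow_Suc_right comp_def)
    also have "\<dots> \<le> liminf (\<lambda>n. ereal (s (n+1) * \<rho> ((S ^^ (n+1)) z)))"
    proof (rule Liminf_mono)
      show "\<forall>\<^sub>F n in sequentially. ereal (s n * \<rho> ((S ^^ (n + 1)) z)) \<le> ereal (s (n + 1) * \<rho> ((S ^^ (n + 1)) z))"
        unfolding eventually_sequentially
        using N0 rho0 by (auto intro!: exI[of _ N0] mult_right_mono)
    qed
    also have "\<dots> = \<Phi> z" unfolding \<Phi>_def
      by (rule liminf_shift[where u = "\<lambda>n. ereal (s n * \<rho> ((S ^^ n) z))"])
    finally show ?thesis .
  qed
  have Ginv: "AE z in P. \<forall>j. \<Phi> ((S ^^ j) z) = \<Phi> z"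
    by (rule subinv_AE_all[OF \<Phi>_meas sub])
  have \<Phi>0: "\<Phi> z \<ge> 0" for z
    unfolding \<Phi>_def
    by (rule Liminf_bounded) (auto simp: eventually_sequentially intro!: exI[of _ 1] mult_nonneg_nonneg rho0 less_imp_le[OF spos[rule_format]])

  define c' where "c' = (1 + c) / 2"
  have c'1: "1 < c'" "c' < c" using c1 by (auto simp: c'_def)
  have key: "AE z in P. \<not> (ereal (of_rat q) < \<Phi> z \<and> \<Phi> z < ereal (c' * of_rat q))"
    if q0: "q > 0" for q :: rat
  proof -
    define L1 where "L1 = (of_rat q :: real)"
    define L2 where "L2 = c' * L1"
    define L0 where "L0 = (L2 / c + L1) / 2"
    have L1p: "L1 > 0" using q0 by (simp add: L1_def)
    have "L2 / c < L1" using c'1 c1 L1p by (simp add: L2_def divide_less_eq)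
    have half: "\<And>a b::real. a < b \<Longrightarrow> a < (a+b)/2 \<and> (a+b)/2 < b" by auto
    from half[OF \<open>L2 / c < L1\<close>] have L0b: "L2 / c < L0" "L0 < L1" unfolding L0_def by auto
    define E where "E = {z\<in>space P. ereal L1 < \<Phi> z \<and> \<Phi> z < ereal L2}"
    define Gs where "Gs = {z\<in>space P. \<forall>j. \<Phi> ((S ^^ j) z) = \<Phi> z}"
    define A where "A t = {w\<in>space P. \<exists>m\<ge>t. s m * \<rho> ((S ^^ m) w) < L0} \<inter> E" for t
    have Em: "E \<in> sets P" unfolding E_def using \<Phi>_meas by measurable
    have \<Phi>j: "(\<lambda>z. \<Phi> ((S ^^ j) z)) \<in> borel_measurable P" for j
      by (rule measurable_compose[OF Sn_meas \<Phi>_meas])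
    have Gm: "Gs \<in> sets P" unfolding Gs_def using \<Phi>j \<Phi>_meas by measurable
    have \<rho>j: "(\<lambda>w. \<rho> ((S ^^ j) w)) \<in> borel_measurable P" for j
      by (rule measurable_compose[OF Sn_meas rho_meas])
    have Am: "A t \<in> sets P" for t unfolding A_def using \<rho>j Em by measurable
    have Adec: "decseq A" unfolding decseq_def A_def
      by (intro allI impI subsetI) (auto intro: le_trans)
    have Aempty: "(\<Inter>t. A t) = {}"
    proof (rule ccontr)
      assume "(\<Inter>t. A t) \<noteq> {}"
      then obtain w where w: "\<And>t. w \<in> A t" by blast
      then have wE: "w \<in> E" by (auto simp: A_def)
      have "\<Phi> w \<le> ereal L0"
      proof (rule ccontr)
        assume "\<not> \<Phi> w \<le> ereal L0"
        then have "ereal L0 < \<Phi> w" by simp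
        then have "\<forall>\<^sub>F m in sequentially. ereal L0 < ereal (s m * \<rho> ((S ^^ m) w))"
          unfolding \<Phi>_def by (rule less_LiminfD)
        then obtain t where "\<And>m. m \<ge> t \<Longrightarrow> L0 < s m * \<rho> ((S ^^ m) w)"
          by (auto simp: eventually_sequentially)
        moreover from w[of t] obtain m where "m \<ge> t" "s m * \<rho> ((S ^^ m) w) < L0"
          by (auto simp: A_def)
        ultimately show False by force
      qed
      moreover have "ereal L1 < \<Phi> w" using wE by (simp add: E_def)
      ultimately have "ereal L1 < ereal L0" by (metis less_le_trans)
      with L0b show False by simp
    qed
    have Alim: "(\<lambda>t. measure P (A t)) \<longlonglongrightarrow> 0"
      using finite_Lim_measure_decseq[of A] Am Adec Aempty by auto
    have bound: "measure P (E \<inter> Gs) \<le> 4 * measure P (A t)" for t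
    proof -
      define F where "F N = {z\<in>space P. \<exists>n\<in>{1..N}. (1/4) * real n \<le> (\<Sum>i<n. indicator (A t) ((S ^^ i) z))}" for N
      have Fm: "F N \<in> sets P" for N unfolding F_def by (rule F_meas[OF Am])
      have Fb: "measure P (F N) \<le> 4 * measure P (A t)" for N
        using maximal[OF Am, of "1/4" N] by (simp add: F_def mult.commute)
      have Finc: "incseq F" unfolding incseq_def F_def
        by (intro allI impI subsetI) (auto intro: le_trans)
      have "(\<lambda>N. measure P (F N)) \<longlonglongrightarrow> measure P (\<Union>N. F N)"
        using finite_Lim_measure_incseq[of F] Fm Finc by auto
      then have U: "measure P (\<Union>N. F N) \<le> 4 * measure P (A t)"
        by (rule LIMSEQ_le_const2) (use Fb in auto)
      have sub: "E \<inter> Gs \<subseteq> (\<Union>N. F N)"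
      proof
        fix z assume z: "z \<in> E \<inter> Gs"
        then have zs: "z \<in> space P" and zE: "L1 < \<Phi> z" "\<Phi> z < L2"
          and zG: "\<And>j. \<Phi> ((S ^^ j) z) = \<Phi> z"
          by (auto simp: E_def Gs_def)
        define T0 where "T0 = max t N0"
        have T01: "T0 \<ge> 1" "T0 \<ge> t" "T0 \<ge> N0" using N01 by (auto simp: T0_def)
        have freq: "\<exists>n\<ge>B. s n * \<rho> ((S ^^ n) z) < L2" for B
        proof (rule ccontr)
          assume "\<not> ?thesis"
          then have "\<forall>\<^sub>F n in sequentially. ereal L2 \<le> ereal (s n * \<rho> ((S ^^ n) z))"
            by (auto simp: eventually_sequentially intro!: exI[of _ B] simp: not_less)
          then have "ereal L2 \<le> \<Phi> z" unfolding \<Phi>_def by (rule Liminf_bounded)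
          with zE show False by simp
        qed
        obtain n where n: "n \<ge> 4 * T0" "s n * \<rho> ((S ^^ n) z) < L2" using freq by blast
        define k where "k = n div 2"
        define J where "J = (\<lambda>m. n - m) ` {T0..k}"
        have k2: "2 * k \<le> n" "n \<le> 2 * k + 1" by (auto simp: k_def)
        have Jsub: "J \<subseteq> {..<n}" using T01 k2 by (auto simp: J_def)
        have cardJ: "card J = k + 1 - T0"
        proof -
          have "inj_on (\<lambda>m. n - m) {T0..k}" using k2 by (auto simp: inj_on_def)
          then show ?thesis by (simp add: J_def card_image)
        qed
        have inA: "(S ^^ j) z \<in> A t" if j: "j \<in> J" for j
        proof -
          obtain m where m: "T0 \<le> m" "m \<le> k" "j = n - m" using j by (auto simp: J_def)
          have jn: "m + j = n" using m k2 by simp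
          have sp: "(S ^^ j) z \<in> space P" by (rule Sn_space[OF zs])
          have comp: "(S ^^ m) ((S ^^ j) z) = (S ^^ n) z"
            using jn by (metis comp_apply funpow_add)
          have "c * s m < s (2 * m)" using sc T01 m by simp
          also have "s (2 * m) \<le> s n" using smono[of "2*m" n] T01 m k2 by simp
          finally have csm: "c * s m \<le> s n" by simp
          have "c * (s m * \<rho> ((S ^^ n) z)) \<le> s n * \<rho> ((S ^^ n) z)"
            using mult_right_mono[OF csm rho0] by (simp add: mult.assoc)
          also have "\<dots> < L2" by (rule n(2))
          finally have "s m * \<rho> ((S ^^ n) z) < L2 / c" using c1 by (simp add: less_divide_eq mult.commute)
          then have lt: "s m * \<rho> ((S ^^ m) ((S ^^ j) z)) < L0" using L0b comp by simp
          have "(S ^^ j) z \<in> E" using sp zG[of j] zE by (simp add: E_def)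
          moreover have "\<exists>m'\<ge>t. s m' * \<rho> ((S ^^ m') ((S ^^ j) z)) < L0"
            using lt m T01 by (intro exI[of _ m]) auto
          ultimately show ?thesis using sp by (simp add: A_def)
        qed
        have "real (card J) = (\<Sum>i\<in>J. indicator (A t) ((S ^^ i) z))"
          using inA by simp
        also have "\<dots> \<le> (\<Sum>i<n. indicator (A t) ((S ^^ i) z))"
          by (rule sum_mono2) (use Jsub in auto)
        finally have cs: "real (card J) \<le> (\<Sum>i<n. indicator (A t) ((S ^^ i) z))" .
        have "n \<le> 4 * (k + 1 - T0)" using n(1) k2 by linarith
        then have "(1/4) * real n \<le> real (card J)" unfolding cardJ by linarith
        with cs have "(1/4) * real n \<le> (\<Sum>i<n. indicator (A t) ((S ^^ i) z))" by linarith
        moreover have "n \<in> {1..n}" using n(1) T01 by auto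
        ultimately have "z \<in> F n" using zs by (auto simp: F_def)
        then show "z \<in> (\<Union>N. F N)" by blast
      qed
      have "measure P (E \<inter> Gs) \<le> measure P (\<Union>N. F N)"
        by (rule finite_measure_mono[OF sub]) (use Fm in auto)
      with U show ?thesis by simp
    qed
    have "measure P (E \<inter> Gs) \<le> 0"
    proof (rule LIMSEQ_le_const)
      show "(\<lambda>t. 4 * measure P (A t)) \<longlonglongrightarrow> 0" using tendsto_mult_right_zero[OF Alim] by simp
      show "\<exists>N. \<forall>n\<ge>N. measure P (E \<inter> Gs) \<le> 4 * measure P (A n)" using bound by blast
    qed
    then have "E \<inter> Gs \<in> null_sets P" using Em Gm by (auto simp: emeasure_eq_measure null_sets_def intro!: antisym)
    then have "AE z in P. z \<notin> E \<inter> Gs" by (rule AE_not_in)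
    moreover note Ginv
    moreover have "AE z in P. z \<in> space P" by (rule AE_space)
    ultimately show ?thesis
      by eventually_elim (auto simp: E_def Gs_def L1_def L2_def)
  qed
  have "AE z in P. q > 0 \<longrightarrow> \<not> (ereal (of_rat q) < \<Phi> z \<and> \<Phi> z < ereal (c' * of_rat q))" for q :: rat
    using key[of q] by (cases "q > 0") auto
  then have "AE z in P. \<forall>q::rat. q > 0 \<longrightarrow> \<not> (ereal (of_rat q) < \<Phi> z \<and> \<Phi> z < ereal (c' * of_rat q))"
    by (simp add: AE_all_countable)
  then show ?thesis
  proof (rule AE_mp, intro AE_I2 impI)
    fix z assume H: "\<forall>q::rat. q > 0 \<longrightarrow> \<not> (ereal (of_rat q) < \<Phi> z \<and> \<Phi> z < ereal (c' * of_rat q))"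
    show "liminf (\<lambda>n. ereal (s n * \<rho> ((S ^^ n) z))) \<in> {0, \<infinity>}"
    proof (rule ccontr)
      assume "\<not> ?thesis"
      then have nz: "\<Phi> z \<noteq> 0" "\<Phi> z \<noteq> \<infinity>" unfolding \<Phi>_def by auto
      obtain x where x: "\<Phi> z = ereal x" "x > 0" using \<Phi>0[of z] nz
        by (cases "\<Phi> z") auto
      have "x / c' < x" using x c'1 by (simp add: divide_less_eq)
      then obtain r where r: "r \<in> \<rat>" "x / c' < r" "r < x" using Rats_dense_in_real by blast
      obtain q where rq: "r = of_rat q" using r(1) Rats_cases by blast
      have r0: "r > 0" using r x c'1 by (smt (verit) divide_pos_pos)
      then have q0: "q > 0" using rq by simp
      have "x < c' * r" using r(2) c'1 by (simp add: divide_less_eq mult.commute)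
      with r rq x have "ereal (of_rat q) < \<Phi> z \<and> \<Phi> z < ereal (c' * of_rat q)" by simp
      with H q0 show False by blast
    qed
  qed
qed
end

lemma dist_meas_sep:
  assumes sep: "separable_space (euclidean :: 'a::metric_space topology)"
  shows "(\<lambda>z::'a \<times> 'a. dist (fst z) (snd z)) \<in> borel_measurable (borel \<Otimes>\<^sub>M borel)"
proof -
  obtain D :: "'a set" where D: "countable D" "closure D = UNIV"
    using sep by (auto simp: separable_space_def euclidean_closure_of)
  show ?thesis
  proof (subst borel_measurable_iff_less, intro allI)
    fix r :: real
    define I where "I = {(q, a, b). q \<in> D \<and> a \<in> \<rat> \<and> b \<in> \<rat> \<and> 0 < a \<and> 0 < b \<and> a + b < r}"
    have cI: "countable I"
      by (rule countable_subset[of _ "D \<times> \<rat> \<times> \<rat>"]) (auto simp: I_def D countable_rat)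
    have eq: "{w \<in> space (borel \<Otimes>\<^sub>M borel :: ('a \<times> 'a) measure). dist (fst w) (snd w) < r}
        = (\<Union>(q, a, b)\<in>I. ball q a \<times> ball q b)"
    proof (intro equalityI subsetI)
      fix w :: "'a \<times> 'a" assume "w \<in> {w \<in> space (borel \<Otimes>\<^sub>M borel :: ('a \<times> 'a) measure). dist (fst w) (snd w) < r}"
      then have w: "dist (fst w) (snd w) < r" by simp
      define u where "u = fst w"
      define v where "v = snd w"
      define \<delta> where "\<delta> = r - dist u v"
      have \<delta>: "\<delta> > 0" using w by (simp add: \<delta>_def u_def v_def)
      have "\<forall>\<epsilon>>0. \<exists>y\<in>D. dist y u < \<epsilon>" using D(2) closure_approachable[of u D] by auto
      moreover have "\<delta> / 4 > 0" using \<delta> by simp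
      ultimately obtain q where q: "q \<in> D" "dist q u < \<delta> / 4" by blast
      obtain a where a: "a \<in> \<rat>" "\<delta> / 4 < a" "a < \<delta> / 2"
        using Rats_dense_in_real[of "\<delta>/4" "\<delta>/2"] \<delta> by auto
      obtain b where b: "b \<in> \<rat>" "dist u v + \<delta> / 4 < b" "b < dist u v + \<delta> / 2"
        using Rats_dense_in_real[of "dist u v + \<delta>/4" "dist u v + \<delta>/2"] \<delta> by auto
      have "dist v q \<le> dist v u + dist u q" by (rule dist_triangle)
      then have vq: "dist q v < b" using q b by (simp add: dist_commute)
      have uq: "dist q u < a" using q a by simp
      have b0: "0 < b" using b \<delta> zero_le_dist[of u v] by linarith
      have a0: "0 < a" using a \<delta> by linarith
      have "a + b < dist u v + \<delta>" using a(3) b(3) by linarith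
      then have abr: "a + b < r" by (simp add: \<delta>_def)
      have "(q, a, b) \<in> I" using q a b a0 b0 abr by (simp add: I_def)
      moreover have "w \<in> ball q a \<times> ball q b" using uq vq
        by (cases w) (auto simp: u_def v_def)
      ultimately show "w \<in> (\<Union>(q, a, b)\<in>I. ball q a \<times> ball q b)" by blast
    next
      fix w :: "'a \<times> 'a" assume "w \<in> (\<Union>(q, a, b)\<in>I. ball q a \<times> ball q b)"
      then obtain q a b where qab: "(q, a, b) \<in> I" "w \<in> ball q a \<times> ball q b" by blast
      then have "dist (fst w) (snd w) \<le> dist q (fst w) + dist q (snd w)"
        by (simp add: dist_triangle3)
      also have "\<dots> < a + b" using qab by (cases w) auto
      also have "\<dots> < r" using qab by (auto simp: I_def)
      finally show "w \<in> {w \<in> space (borel \<Otimes>\<^sub>M borel :: ('a \<times> 'a) measure). dist (fst w) (snd w) < r}"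
        by (simp add: space_pair_measure)
    qed
    show "{w \<in> space (borel \<Otimes>\<^sub>M borel :: ('a \<times> 'a) measure). dist (fst w) (snd w) < r} \<in> sets (borel \<Otimes>\<^sub>M borel :: ('a \<times> 'a) measure)"
      unfolding eq
      by (rule sets.countable_UN'[OF cI]) (auto intro!: pair_measureI)
  qed
qed

lemma distr_inv:
  assumes "T \<in> measurable M M" "T_invariant T M"
  shows "distr M M T = M"
  by (rule measure_eqI) (use assms in \<open>auto simp: emeasure_distr T_invariant_def\<close>)

lemma main_pair:
  fixes T :: "'a::metric_space \<Rightarrow> 'a" and M N :: "'a measure" and s :: "nat \<Rightarrow> real"
  assumes sep: "separable_space (euclidean :: 'a topology)"
    and T_meas: "T \<in> borel_measurable borel"
    and M_borel: "sets M = sets borel" and M_prob: "prob_space M" and M_inv: "T_invariant T M"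
    and N_borel: "sets N = sets borel" and N_prob: "prob_space N" and N_inv: "T_invariant T N"
    and spos: "\<forall>n\<ge>1. s n > 0" and jumpy: "two_jumpy s"
  shows "AE z in M \<Otimes>\<^sub>M N. gauge_phi s T (fst z) (snd z) \<in> {0, \<infinity>}
                         \<and> gauge_psi s T (fst z) (snd z) \<in> {0, \<infinity>}"
proof -
  have TM: "T \<in> measurable M M" using T_meas M_borel by (simp cong: measurable_cong_sets)
  have TN: "T \<in> measurable N N" using T_meas N_borel by (simp cong: measurable_cong_sets)
  have dM: "distr M M T = M" by (rule distr_inv[OF TM M_inv])
  have dN: "distr N N T = N" by (rule distr_inv[OF TN N_inv])
  have PP: "prob_space (M \<Otimes>\<^sub>M N)" by (rule prob_space_pair[OF M_prob N_prob])
  have sfN: "sigma_finite_measure N" using N_prob by (simp add: prob_space_imp_sigma_finite)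
  have sfN': "sigma_finite_measure (distr N N (\<lambda>x. x))" using sfN by (simp add: distr_id)
  have sfNT: "sigma_finite_measure (distr N N T)" using sfN by (simp add: dN)
  have idN: "(\<lambda>x. x) \<in> measurable N N" by simp
  define S1 where "S1 = (\<lambda>(x, y). (T x, y :: 'a))"
  define S2 where "S2 = (\<lambda>(x, y). (T x, T y :: 'a))"
  have S1m: "S1 \<in> measurable (M \<Otimes>\<^sub>M N) (M \<Otimes>\<^sub>M N)" unfolding S1_def using TM by measurable
  have S2m: "S2 \<in> measurable (M \<Otimes>\<^sub>M N) (M \<Otimes>\<^sub>M N)" unfolding S2_def using TM TN by measurable
  have S1p: "distr (M \<Otimes>\<^sub>M N) (M \<Otimes>\<^sub>M N) S1 = M \<Otimes>\<^sub>M N"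
    using pair_measure_distr[OF TM idN sfN'] dM by (simp add: distr_id S1_def)
  have S2p: "distr (M \<Otimes>\<^sub>M N) (M \<Otimes>\<^sub>M N) S2 = M \<Otimes>\<^sub>M N"
    using pair_measure_distr[OF TM TN sfNT] dM dN by (simp add: S2_def)
  interpret m1: mpres "M \<Otimes>\<^sub>M N" S1 by (intro mpres.intro PP mpres_axioms.intro S1m S1p)
  interpret m2: mpres "M \<Otimes>\<^sub>M N" S2 by (intro mpres.intro PP mpres_axioms.intro S2m S2p)
  have rm: "(\<lambda>z::'a \<times> 'a. dist (fst z) (snd z)) \<in> borel_measurable (M \<Otimes>\<^sub>M N)"
    by (subst measurable_cong_sets[OF sets_pair_measure_cong[OF M_borel N_borel] refl])
      (rule dist_meas_sep[OF sep])
  have S1n: "(S1 ^^ n) z = ((T ^^ n) (fst z), snd z)" for n z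
    by (induction n) (auto simp: S1_def split: prod.splits)
  have S2n: "(S2 ^^ n) z = ((T ^^ n) (fst z), (T ^^ n) (snd z))" for n z
    by (induction n) (auto simp: S2_def split: prod.splits)
  have A1: "AE z in M \<Otimes>\<^sub>M N. liminf (\<lambda>n. ereal (s n * dist (fst ((S1 ^^ n) z)) (snd ((S1 ^^ n) z)))) \<in> {0, \<infinity>}"
    by (rule m1.zero_inf[OF rm _ spos jumpy]) simp
  have A2: "AE z in M \<Otimes>\<^sub>M N. liminf (\<lambda>n. ereal (s n * dist (fst ((S2 ^^ n) z)) (snd ((S2 ^^ n) z)))) \<in> {0, \<infinity>}"
    by (rule m2.zero_inf[OF rm _ spos jumpy]) simp
  from A1 A2 show ?thesis
    by eventually_elim (simp add: S1n S2n gauge_phi_def gauge_psi_def)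
qed

lemma powr_jumpy:
  assumes a: "(\<alpha>::real) > 0"
  shows "two_jumpy (\<lambda>n. real n powr \<alpha>)"
proof -
  have "\<forall>\<^sub>F n in sequentially. real n powr \<alpha> \<le> real (Suc n) powr \<alpha>"
    using a by (intro always_eventually allI powr_mono2) auto
  moreover have "liminf (\<lambda>n. ereal (real (2 * n) powr \<alpha> / real n powr \<alpha>)) = ereal (2 powr \<alpha>)"
  proof (rule lim_imp_Liminf)
    show "sequentially \<noteq> bot" by simp
    have "\<forall>\<^sub>F n in sequentially. ereal (real (2 * n) powr \<alpha> / real n powr \<alpha>) = ereal (2 powr \<alpha>)"
      unfolding eventually_sequentially
      by (intro exI[of _ 1] allI impI) (simp add: powr_mult)
    then show "(\<lambda>n. ereal (real (2 * n) powr \<alpha> / real n powr \<alpha>)) \<longlonglongrightarrow> ereal (2 powr \<alpha>)"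
      by (rule tendsto_eventually)
  qed
  moreover have "(1::real) < 2 powr \<alpha>" using a by simp
  ultimately show ?thesis by (simp add: two_jumpy_def)
qed

theorem theorem3p2:
  fixes T :: "'a::metric_space \<Rightarrow> 'a" and M N :: "'a measure" and s :: "nat \<Rightarrow> real"
  assumes sep: "separable_space (euclidean :: 'a topology)"
    and T_meas: "T \<in> borel_measurable borel"
    and M_borel: "sets M = sets borel" and M_prob: "prob_space M" and M_inv: "T_invariant T M"
    and N_borel: "sets N = sets borel" and N_prob: "prob_space N" and N_inv: "T_invariant T N"
    and scale: "scale_seq s" and jumpy: "two_jumpy s"
  shows "(AE z in M \<Otimes>\<^sub>M N. gauge_phi s T (fst z) (snd z) \<in> {0, \<infinity>}
                         \<and> gauge_psi s T (fst z) (snd z) \<in> {0, \<infinity>})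
    \<and> (\<forall>\<alpha>::real. \<alpha> > 0 \<longrightarrow>
         (AE z in M \<Otimes>\<^sub>M N. gauge_phi (\<lambda>n. real n powr \<alpha>) T (fst z) (snd z) \<in> {0, \<infinity>}
                          \<and> gauge_psi (\<lambda>n. real n powr \<alpha>) T (fst z) (snd z) \<in> {0, \<infinity>}))"
proof (intro conjI allI impI)
  show "AE z in M \<Otimes>\<^sub>M N. gauge_phi s T (fst z) (snd z) \<in> {0, \<infinity>}
                         \<and> gauge_psi s T (fst z) (snd z) \<in> {0, \<infinity>}"
    using scale by (intro main_pair[OF sep T_meas M_borel M_prob M_inv N_borel N_prob N_inv _ jumpy])
      (simp add: scale_seq_def)
next
  fix \<alpha> :: real assume a: "\<alpha> > 0"
  show "AE z in M \<Otimes>\<^sub>M N. gauge_phi (\<lambda>n. real n powr \<alpha>) T (fst z) (snd z) \<in> {0, \<infinity>}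
                          \<and> gauge_psi (\<lambda>n. real n powr \<alpha>) T (fst z) (snd z) \<in> {0, \<infinity>}"
    by (rule main_pair[OF sep T_meas M_borel M_prob M_inv N_borel N_prob N_inv _ powr_jumpy[OF a]]) auto
qed

end
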